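(* Let $\psi\in\mathrm{SO}^0(2,1)$. Then there exists $K$ such that, for any $\epsilon>0$, an element $g\in\mathrm{SO}^0(2,1)$ is $\epsilon/K$-hyperbolic whenever $\psi g\psi^{-1}$ is $\epsilon$-hyperbolic.
   Context: $\mathbb{R}^{2,1}$ is $\mathbb{R}^3$ with $\mathbb{B}(u,v)=u_1v_1+u_2v_2-u_3v_3$; $\mathrm{SO}^0(2,1)$ is the identity component of its linear isometry group; $\rho$ is Euclidean distance. $S^1=\{(\cos\phi,\sin\phi,1)\}$. $g\in\mathrm{SO}^0(2,1)$ is hyperbolic if it has real distinct eigenvalues, necessarily $\lambda<1<\lambda^{-1}$; $x^-(g)$, $x^+(g)$ are the eigenvectors on $S^1$ for $\lambda$, $\lambda^{-1}$. $g$ is $\epsilon$-hyperbolic if it is hyperbolic and $\rho(x^+(g),x^-(g))\ge\epsilon$. *)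

theory Defs
  imports "HOL-Analysis.Analysis"
begin

definition Bform :: "real^3 \<Rightarrow> real^3 \<Rightarrow> real" where
  "Bform u v = u$1 * v$1 + u$2 * v$2 - u$3 * v$3"

definition O21 :: "(real^3^3) set" where
  "O21 = {g. invertible g \<and> (\<forall>u v. Bform (g *v u) (g *v v) = Bform u v)}"

definition SO0_21 :: "(real^3^3) set" where
  "SO0_21 = connected_component_set O21 (mat 1)"

definition S1 :: "(real^3) set" where
  "S1 = range (\<lambda>\<phi>. vector [cos \<phi>, sin \<phi>, 1])"

definition hyperbolic :: "real^3^3 \<Rightarrow> bool" where
  "hyperbolic g \<longleftrightarrow> (\<exists>a b c. a \<noteq> b \<and> b \<noteq> c \<and> a \<noteq> c \<and>
      (\<forall>l\<in>{a,b,c}. \<exists>v. v \<noteq> 0 \<and> g *v v = l *\<^sub>R v))"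

definition x_plus :: "real^3^3 \<Rightarrow> real^3" where
  "x_plus g = (THE x. x \<in> S1 \<and> (\<exists>l. 1 < l \<and> g *v x = l *\<^sub>R x))"

definition x_minus :: "real^3^3 \<Rightarrow> real^3" where
  "x_minus g = (THE x. x \<in> S1 \<and> (\<exists>l. 0 < l \<and> l < 1 \<and> g *v x = l *\<^sub>R x))"

definition eps_hyperbolic :: "real \<Rightarrow> real^3^3 \<Rightarrow> bool" where
  "eps_hyperbolic \<epsilon> g \<longleftrightarrow> hyperbolic g \<and> dist (x_plus g) (x_minus g) \<ge> \<epsilon>"

end

theory Submission
  imports Defs
begin

lemma Bform_scale: "Bform (a *\<^sub>R u) (b *\<^sub>R v) = a * b * Bform u v"
  by (simp add: Bform_def algebra_simps)

lemma S1_iff: "x \<in> S1 \<longleftrightarrow> x$3 = 1 \<and> (x$1)\<^sup>2 + (x$2)\<^sup>2 = 1"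
proof
  assume "x \<in> S1"
  then obtain t where "x = vector [cos t, sin t, 1]" unfolding S1_def by auto
  then show "x$3 = 1 \<and> (x$1)\<^sup>2 + (x$2)\<^sup>2 = 1" by simp
next
  assume a: "x$3 = 1 \<and> (x$1)\<^sup>2 + (x$2)\<^sup>2 = 1"
  then obtain t where t: "x$1 = cos t" "x$2 = sin t" using sincos_total_2pi[of "x$1" "x$2"] by blast
  have "x = vector [cos t, sin t, 1]"
    using a t by (simp add: vec_eq_iff forall_3)
  then show "x \<in> S1" unfolding S1_def by auto
qed

lemma null_nz: "Bform v v = 0 \<Longrightarrow> v \<noteq> 0 \<Longrightarrow> v$3 \<noteq> 0"
proof
  assume "Bform v v = 0" "v \<noteq> 0" "v$3 = 0"
  then have "(v$1)\<^sup>2 + (v$2)\<^sup>2 = 0" by (simp add: Bform_def power2_eq_square)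
  then have "v$1 = 0" "v$2 = 0" by (simp_all add: sum_power2_eq_zero_iff)
  with \<open>v$3 = 0\<close> \<open>v \<noteq> 0\<close> show False by (simp add: vec_eq_iff forall_3)
qed

lemma normalize_S1:
  assumes "Bform v v = 0" "v$3 \<noteq> 0"
  shows "(1 / v$3) *\<^sub>R v \<in> S1"
proof -
  have "(v$1)\<^sup>2 + (v$2)\<^sup>2 = (v$3)\<^sup>2" using assms(1) by (simp add: Bform_def power2_eq_square)
  then have "(v$1 / v$3)\<^sup>2 + (v$2 / v$3)\<^sup>2 = 1"
    using assms(2) by (simp add: power_divide add_divide_distrib[symmetric] del: divide_eq_1_iff)
  then show ?thesis using assms(2) by (simp add: S1_iff)
qed

lemma S1_Bform: "x \<in> S1 \<Longrightarrow> Bform x x = 0"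
  by (simp add: S1_iff Bform_def power2_eq_square)

lemma S1_nz: "x \<in> S1 \<Longrightarrow> x \<noteq> 0"
  by (auto simp: S1_iff)

lemma S1_Bform_ne: assumes "x \<in> S1" "y \<in> S1" "x \<noteq> y" shows "Bform x y \<noteq> 0"
proof
  assume b: "Bform x y = 0"
  have "(x$1 - y$1)\<^sup>2 + (x$2 - y$2)\<^sup>2 = 0"
    using assms b by (simp add: S1_iff Bform_def power2_eq_square algebra_simps)
  then have "x$1 = y$1" "x$2 = y$2" by (simp_all add: sum_power2_eq_zero_iff)
  with assms show False by (simp add: S1_iff vec_eq_iff forall_3)
qed

lemma O21_inv: "g \<in> O21 \<Longrightarrow> invertible g" by (simp add: O21_def)

lemma inv_ker: "invertible g \<Longrightarrow> v \<noteq> 0 \<Longrightarrow> g *v v \<noteq> 0"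
proof
  assume "invertible g" "v \<noteq> 0" "g *v v = 0"
  then obtain A where "A ** g = mat 1" unfolding invertible_def by blast
  then have "v = A *v (g *v v)" by (simp add: matrix_vector_mul_assoc)
  with \<open>g *v v = 0\<close> \<open>v \<noteq> 0\<close> show False by simp
qed

lemma O21_nz: assumes "g \<in> O21" "x \<in> S1" shows "(g *v x)$3 \<noteq> 0"
proof -
  have "Bform (g *v x) (g *v x) = 0" using assms S1_Bform by (simp add: O21_def)
  moreover have "g *v x \<noteq> 0" using inv_ker[OF O21_inv[OF assms(1)] S1_nz[OF assms(2)]] .
  ultimately show ?thesis using null_nz[of "g *v x"] by simp
qed

lemma cone: assumes "g \<in> SO0_21" "x \<in> S1" shows "(g *v x)$3 > 0"
proof (rule ccontr)
  assume "\<not> ?thesis"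
  then have le: "(g *v x)$3 \<le> 0" by simp
  have sub: "SO0_21 \<subseteq> O21" unfolding SO0_21_def by (rule connected_component_subset)
  have conn: "connected SO0_21" unfolding SO0_21_def by (rule connected_connected_component)
  have "mat 1 \<in> O21" using assms(1) unfolding SO0_21_def
    using connected_component_eq_empty by (metis empty_iff)
  then have id: "mat 1 \<in> SO0_21" unfolding SO0_21_def
    by (simp add: connected_component_refl mem_Collect_eq)
  define f where "f = (\<lambda>h::real^3^3. (h *v x)$3)"
  have cont: "continuous_on UNIV f" unfolding f_def matrix_vector_mult_def
    by (intro continuous_intros)
  have c: "connected (f ` SO0_21)"
    using connected_continuous_image[OF continuous_on_subset[OF cont] conn] by simp
  have "f (mat 1) = 1" using assms(2) by (simp add: f_def S1_iff)
  then have m1: "1 \<in> f ` SO0_21" using id by (metis image_eqI)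
  have mg: "f g \<in> f ` SO0_21" using assms(1) by (rule imageI)
  have "f g \<le> 0" using le by (simp add: f_def)
  then have "0 \<in> f ` SO0_21"
    using connectedD_interval[OF c mg m1] by simp
  then obtain h where "h \<in> SO0_21" "(h *v x)$3 = 0" by (auto simp: f_def)
  then show False using O21_nz[of h x] sub assms(2) by auto
qed

definition Jm :: "real^3 \<Rightarrow> real^3" where
  "Jm v = (\<chi> i. if i = 3 then - v$i else v$i)"

lemma Bform_J: "Bform u v = u \<bullet> Jm v"
  by (simp add: Bform_def Jm_def inner_vec_def sum_3)

lemma Jm_scale: "Jm (c *\<^sub>R v) = c *\<^sub>R Jm v"
  by (simp add: Jm_def vec_eq_iff)

lemma Jm_nz: "v \<noteq> 0 \<Longrightarrow> Jm v \<noteq> 0"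
  by (simp add: Jm_def vec_eq_iff forall_3)

lemma transp_J:
  assumes "g \<in> O21"
  shows "transpose g *v Jm (g *v v) = Jm v"
proof -
  have "u \<bullet> (transpose g *v Jm (g *v v)) = u \<bullet> Jm v" for u
  proof -
    have "u \<bullet> (transpose g *v Jm (g *v v)) = (g *v u) \<bullet> Jm (g *v v)"
      by (simp add: transpose_matrix_vector) (metis inner_commute dot_lmul_matrix)
    also have "\<dots> = Bform (g *v u) (g *v v)" by (simp add: Bform_J)
    also have "\<dots> = Bform u v" using assms by (simp add: O21_def)
    finally show ?thesis by (simp add: Bform_J)
  qed
  then show ?thesis using vector_eq_ldot by blast
qed

lemma transpose_diff': "transpose (A - B) = transpose A - transpose (B :: real^3^3)"
  by (simp add: transpose_def vec_eq_iff)

lemma transpose_smat: "transpose (c *\<^sub>R mat 1 :: real^3^3) = c *\<^sub>R mat 1"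
  by (simp add: transpose_def vec_eq_iff mat_def)

lemma smat_mult: "(c *\<^sub>R mat 1 :: real^3^3) *v x = c *\<^sub>R x"
  by (metis matrix_scaleR_vector_ac matrix_vector_mul_lid)

lemma eig_inv:
  assumes "g \<in> O21" "v \<noteq> 0" "g *v v = l *\<^sub>R v" "l \<noteq> 0"
  shows "\<exists>w. w \<noteq> 0 \<and> g *v w = (1/l) *\<^sub>R w"
proof -
  define T where "T = transpose g"
  define c where "c = 1 / l"
  have "T *v Jm (l *\<^sub>R v) = Jm v" using transp_J[OF assms(1), of v] assms(3) by (simp add: T_def)
  then have "l *\<^sub>R (T *v Jm v) = Jm v" by (simp add: Jm_scale matrix_vector_mult_scaleR)
  then have "T *v Jm v = c *\<^sub>R Jm v" using assms(4) unfolding c_def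
    by (metis divide_inverse_commute divide_self_if mult.commute real_vector.scale_one scaleR_scaleR)
  then have "(T - c *\<^sub>R mat 1) *v Jm v = 0"
    by (simp add: matrix_vector_mult_diff_rdistrib smat_mult)
  then have "\<not> (\<exists>B. B ** (T - c *\<^sub>R mat 1) = mat 1)"
    using matrix_left_invertible_ker Jm_nz[OF assms(2)] by blast
  then have "\<not> (\<exists>B. B ** transpose (g - c *\<^sub>R mat 1) = mat 1)"
    by (simp add: T_def transpose_diff' transpose_smat)
  then have "\<not> (\<exists>B. (g - c *\<^sub>R mat 1) ** B = mat 1)"
    using left_invertible_transpose by blast
  then have "\<not> (\<exists>B. B ** (g - c *\<^sub>R mat 1) = mat 1)"
    using matrix_left_right_inverse by blast
  then obtain w where "w \<noteq> 0" "(g - c *\<^sub>R mat 1) *v w = 0"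
    using matrix_left_invertible_ker by blast
  then show ?thesis unfolding c_def
    by (intro exI[of _ w]) (simp add: matrix_vector_mult_diff_rdistrib smat_mult)
qed

lemma eig_S1:
  assumes "g \<in> SO0_21" "v \<noteq> 0" "g *v v = l *\<^sub>R v" "l\<^sup>2 \<noteq> 1"
  shows "\<exists>x\<in>S1. g *v x = l *\<^sub>R x \<and> 0 < l"
proof -
  have gO: "g \<in> O21" using assms(1) unfolding SO0_21_def using connected_component_subset by blast
  have "Bform v v = Bform (g *v v) (g *v v)" using gO by (simp add: O21_def)
  also have "\<dots> = l\<^sup>2 * Bform v v" using assms(3) by (simp add: Bform_scale power2_eq_square)
  finally have "Bform v v = 0" using assms(4) by (metis mult_cancel_right2)
  then have v3: "v$3 \<noteq> 0" using null_nz assms(2) by blast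
  define x where "x = (1 / v$3) *\<^sub>R v"
  have xS: "x \<in> S1" unfolding x_def by (rule normalize_S1[OF \<open>Bform v v = 0\<close> v3])
  have gx: "g *v x = l *\<^sub>R x" unfolding x_def using assms(3)
    by (simp add: matrix_vector_mult_scaleR)
  have "(g *v x)$3 > 0" by (rule cone[OF assms(1) xS])
  then have "l > 0" using gx xS by (simp add: S1_iff)
  then show ?thesis using xS gx by blast
qed

lemma S1_pair_prod:
  assumes "\<forall>u v. Bform (h *v u) (h *v v) = Bform u v"
    and "x \<in> S1" "y \<in> S1" "h *v x = l *\<^sub>R x" "h *v y = m *\<^sub>R y" "x \<noteq> y"
  shows "l * m = 1"
proof -
  have "Bform x y = Bform (h *v x) (h *v y)" using assms(1) by simp
  also have "\<dots> = l * m * Bform x y" using assms(4,5) by (simp add: Bform_scale)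
  finally show ?thesis using S1_Bform_ne[OF assms(2,3,6)] by simp
qed

lemma xplus_eq:
  assumes "\<forall>u v. Bform (h *v u) (h *v v) = Bform u v"
    and "x \<in> S1" "1 < l" "h *v x = l *\<^sub>R x"
  shows "x_plus h = x"
  unfolding x_plus_def
proof (rule the_equality)
  show "x \<in> S1 \<and> (\<exists>l>1. h *v x = l *\<^sub>R x)" using assms by blast
  fix y assume "y \<in> S1 \<and> (\<exists>l>1. h *v y = l *\<^sub>R y)"
  then obtain m where m: "y \<in> S1" "1 < m" "h *v y = m *\<^sub>R y" by blast
  show "y = x"
  proof (rule ccontr)
    assume "y \<noteq> x"
    then have "l * m = 1" using S1_pair_prod[OF assms(1,2) m(1) assms(4) m(3)] by auto
    moreover have "1 < l * m" using assms(3) m(2) by (metis less_1_mult)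
    ultimately show False by simp
  qed
qed

lemma xminus_eq:
  assumes "\<forall>u v. Bform (h *v u) (h *v v) = Bform u v"
    and "x \<in> S1" "0 < l" "l < 1" "h *v x = l *\<^sub>R x"
  shows "x_minus h = x"
  unfolding x_minus_def
proof (rule the_equality)
  show "x \<in> S1 \<and> (\<exists>l. 0 < l \<and> l < 1 \<and> h *v x = l *\<^sub>R x)" using assms by blast
  fix y assume "y \<in> S1 \<and> (\<exists>l. 0 < l \<and> l < 1 \<and> h *v y = l *\<^sub>R y)"
  then obtain m where m: "y \<in> S1" "0 < m" "m < 1" "h *v y = m *\<^sub>R y" by blast
  show "y = x"
  proof (rule ccontr)
    assume "y \<noteq> x"
    then have "l * m = 1" using S1_pair_prod[OF assms(1,2) m(1) assms(5) m(4)] by auto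
    moreover have "l * m < 1" using assms(3,4) m(2,3) by (metis mult_strict_mono' mult_1 less_eq_real_def)
    ultimately show False by simp
  qed
qed

lemma SO0_O21: "g \<in> SO0_21 \<Longrightarrow> g \<in> O21"
  unfolding SO0_21_def using connected_component_subset by blast

lemma sq1: "(l::real)\<^sup>2 = 1 \<longleftrightarrow> l = 1 \<or> l = -1"
  by (metis power2_eq_1_iff)

lemma ex_pm:
  assumes "g \<in> SO0_21" "hyperbolic g"
  shows "\<exists>x\<in>S1. \<exists>l>1. g *v x = l *\<^sub>R x" and "\<exists>y\<in>S1. \<exists>m. 0 < m \<and> m < 1 \<and> g *v y = m *\<^sub>R y"
proof -
  obtain a b c where abc: "a \<noteq> b" "b \<noteq> c" "a \<noteq> c"
    "\<forall>l\<in>{a,b,c}. \<exists>v. v \<noteq> 0 \<and> g *v v = l *\<^sub>R v"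
    using assms(2) unfolding hyperbolic_def by blast
  have "\<exists>l\<in>{a,b,c}. l\<^sup>2 \<noteq> 1"
  proof (rule ccontr)
    assume "\<not> ?thesis"
    then have "a\<^sup>2 = 1" "b\<^sup>2 = 1" "c\<^sup>2 = 1" by auto
    then show False using abc(1-3) unfolding sq1 by auto
  qed
  then obtain l v where lv: "l\<^sup>2 \<noteq> 1" "v \<noteq> 0" "g *v v = l *\<^sub>R v" using abc(4) by blast
  obtain x where x: "x \<in> S1" "g *v x = l *\<^sub>R x" "0 < l" using eig_S1[OF assms(1) lv(2,3,1)] by blast
  obtain w where w: "w \<noteq> 0" "g *v w = (1/l) *\<^sub>R w"
    using eig_inv[OF SO0_O21[OF assms(1)] lv(2,3)] x(3) by auto
  have "(1/l)\<^sup>2 \<noteq> 1" using lv(1) by (simp add: power_one_over)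
  then obtain y where y: "y \<in> S1" "g *v y = (1/l) *\<^sub>R y"
    using eig_S1[OF assms(1) w(1,2)] by blast
  have l1: "l \<noteq> 1" using lv(1) by auto
  show "\<exists>x\<in>S1. \<exists>l>1. g *v x = l *\<^sub>R x"
  proof (cases "l > 1")
    case True then show ?thesis using x by blast
  next
    case False
    then have "1 < 1/l" using l1 x(3) by (simp add: less_divide_eq)
    then show ?thesis using y by blast
  qed
  show "\<exists>y\<in>S1. \<exists>m. 0 < m \<and> m < 1 \<and> g *v y = m *\<^sub>R y"
  proof (cases "l > 1")
    case True
    then have "1/l < 1" "0 < 1/l" by auto
    then show ?thesis using y by blast
  next
    case False
    then have "l < 1" using l1 by auto
    then show ?thesis using x by blast
  qed
qed

lemma row3: "((\<psi>::real^3^3) *v (x::real^3))$3 = \<psi>$3$1 * x$1 + \<psi>$3$2 * x$2 + \<psi>$3$3 * x$3"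
  by (simp add: matrix_vector_mult_def sum_3)

lemma lowc:
  assumes "\<psi> \<in> SO0_21"
  shows "\<exists>c>0. \<forall>x\<in>S1. c \<le> (\<psi> *v x)$3"
proof -
  define p where "p = \<psi>$3$1"
  define q where "q = \<psi>$3$2"
  define s where "s = \<psi>$3$3"
  define r where "r = sqrt (p\<^sup>2 + q\<^sup>2)"
  have ev: "(\<psi> *v x)$3 = p * x$1 + q * x$2 + s" if "x \<in> S1" for x
    using that by (simp add: row3 p_def q_def s_def S1_iff)
  have bnd: "- r \<le> p * x$1 + q * x$2" if "x \<in> S1" for x
  proof -
    have "(p * x$1 + q * x$2)\<^sup>2 \<le> (p\<^sup>2 + q\<^sup>2) * ((x$1)\<^sup>2 + (x$2)\<^sup>2)"
    proof -
      have "(p * x$1 + q * x$2)\<^sup>2 + (p * x$2 - q * x$1)\<^sup>2 = (p\<^sup>2 + q\<^sup>2) * ((x$1)\<^sup>2 + (x$2)\<^sup>2)"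
        by (simp add: power2_eq_square algebra_simps)
      moreover have "0 \<le> (p * x$2 - q * x$1)\<^sup>2" by simp
      ultimately show ?thesis by linarith
    qed
    also have "\<dots> = p\<^sup>2 + q\<^sup>2" using that by (simp add: S1_iff)
    finally have "\<bar>p * x$1 + q * x$2\<bar> \<le> r" unfolding r_def
      by (intro real_le_rsqrt) simp
    then show ?thesis by linarith
  qed
  have pos: "s - r > 0"
  proof (cases "r = 0")
    case True
    then have pq: "p = 0" "q = 0" unfolding r_def by (simp_all add: sum_power2_eq_zero_iff)
    have "vector [1, 0, 1] \<in> S1" by (simp add: S1_iff)
    from cone[OF assms this] ev[OF this] show ?thesis using pq True by simp
  next
    case False
    have "0 \<le> p\<^sup>2 + q\<^sup>2" by simp
    then have rp: "r > 0" using False unfolding r_def by (simp add: less_le)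
    have rr: "r\<^sup>2 = p\<^sup>2 + q\<^sup>2" unfolding r_def by simp
    define x0 :: "real^3" where "x0 = vector [- p / r, - q / r, 1]"
    have "(- p / r)\<^sup>2 + (- q / r)\<^sup>2 = (p\<^sup>2 + q\<^sup>2) / r\<^sup>2"
      by (simp add: power_divide add_divide_distrib)
    also have "\<dots> = 1" using rp by (simp add: rr[symmetric])
    finally have "(- p / r)\<^sup>2 + (- q / r)\<^sup>2 = 1" .
    then have x0S: "x0 \<in> S1" by (simp add: S1_iff x0_def)
    have "p * x0$1 + q * x0$2 = - (p\<^sup>2 + q\<^sup>2) / r" using rp by (simp add: x0_def power2_eq_square field_simps)
    also have "\<dots> = - (r\<^sup>2) / r" by (simp only: rr)
    also have "\<dots> = - r" using rp by (simp add: power2_eq_square)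
    finally show ?thesis using cone[OF assms x0S] ev[OF x0S] by simp
  qed
  show ?thesis
    using pos ev bnd by (intro exI[of _ "s - r"]) force
qed

lemma S1_norm: "x \<in> S1 \<Longrightarrow> norm x \<le> 2"
proof -
  assume "x \<in> S1"
  then have "(norm x)\<^sup>2 = 2"
    by (simp add: power2_norm_eq_inner inner_vec_def sum_3 S1_iff power2_eq_square[symmetric])
  show "norm x \<le> 2"
  proof (rule ccontr)
    assume "\<not> norm x \<le> 2"
    then have "2\<^sup>2 < (norm x)\<^sup>2" by (intro power_strict_mono) auto
    with \<open>(norm x)\<^sup>2 = 2\<close> show False by simp
  qed
qed

lemma lip:
  assumes "\<psi> \<in> SO0_21"
  shows "\<exists>K>0. \<forall>x\<in>S1. \<forall>y\<in>S1.
     dist ((1 / (\<psi> *v x)$3) *\<^sub>R (\<psi> *v x)) ((1 / (\<psi> *v y)$3) *\<^sub>R (\<psi> *v y)) \<le> K * dist x y"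
proof -
  obtain c where c: "c > 0" "\<forall>x\<in>S1. c \<le> (\<psi> *v x)$3" using lowc[OF assms] by blast
  obtain M where M: "M > 0" "\<forall>v. norm (\<psi> *v v) \<le> norm v * M"
    using bounded_linear.pos_bounded[OF matrix_vector_mul_bounded_linear] by blast
  define K where "K = M / c + 2 * M * M / (c * c)"
  have Kp: "K > 0" unfolding K_def using c(1) M(1) by (intro add_pos_pos divide_pos_pos mult_pos_pos) auto
  have "dist ((1 / (\<psi> *v x)$3) *\<^sub>R (\<psi> *v x)) ((1 / (\<psi> *v y)$3) *\<^sub>R (\<psi> *v y)) \<le> K * dist x y"
    if xS: "x \<in> S1" and yS: "y \<in> S1" for x y
  proof -
    define a where "a = \<psi> *v x"
    define b where "b = \<psi> *v y"
    define \<alpha> where "\<alpha> = a$3"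
    define \<beta> where "\<beta> = b$3"
    define d where "d = dist x y"
    define e where "e = a - b"
    have ca: "c \<le> \<alpha>" using c xS unfolding \<alpha>_def a_def by blast
    have cb: "c \<le> \<beta>" using c yS unfolding \<beta>_def b_def by blast
    have ap: "\<alpha> > 0" "\<beta> > 0" using ca cb c by auto
    have ne: "norm e \<le> d * M" unfolding e_def a_def b_def d_def dist_norm
      using M(2)[rule_format, of "x - y"] by (simp add: matrix_vector_mult_diff_distrib mult.commute)
    have "norm y * M \<le> 2 * M" using mult_right_mono[OF S1_norm[OF yS]] M(1) by simp
    then have nb: "norm b \<le> 2 * M" unfolding b_def using M(2)[rule_format, of y] by linarith
    have de: "\<bar>\<beta> - \<alpha>\<bar> \<le> norm e"
    proof -
      have "\<beta> - \<alpha> = - (e$3)" unfolding e_def \<alpha>_def \<beta>_def by simp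
      then show ?thesis using component_le_norm_cart[of e 3] by simp
    qed
    have eq: "(1/\<alpha>) *\<^sub>R a - (1/\<beta>) *\<^sub>R b = (1/\<alpha>) *\<^sub>R e + ((\<beta> - \<alpha>) / (\<alpha> * \<beta>)) *\<^sub>R b"
    proof -
      have "(1/\<alpha>) - (1/\<beta>) = (\<beta> - \<alpha>) / (\<alpha> * \<beta>)" using ap by (simp add: field_simps)
      moreover have "(1/\<alpha>) *\<^sub>R a - (1/\<beta>) *\<^sub>R b = (1/\<alpha>) *\<^sub>R (a - b) + ((1/\<alpha>) - (1/\<beta>)) *\<^sub>R b"
        by (simp add: algebra_simps)
      ultimately show ?thesis unfolding e_def by simp
    qed
    have "norm ((1/\<alpha>) *\<^sub>R a - (1/\<beta>) *\<^sub>R b) \<le> norm ((1/\<alpha>) *\<^sub>R e) + norm (((\<beta> - \<alpha>) / (\<alpha> * \<beta>)) *\<^sub>R b)"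
      unfolding eq by (rule norm_triangle_ineq)
    also have "norm ((1/\<alpha>) *\<^sub>R e) = norm e / \<alpha>" using ap by simp
    also have "norm (((\<beta> - \<alpha>) / (\<alpha> * \<beta>)) *\<^sub>R b) = \<bar>\<beta> - \<alpha>\<bar> * norm b / (\<alpha> * \<beta>)"
      using ap by (simp add: abs_mult)
    also have "norm e / \<alpha> \<le> d * M / c"
      using frac_le[of "d * M" "norm e" c \<alpha>] ne ca c M(1) unfolding d_def by simp
    also have "\<bar>\<beta> - \<alpha>\<bar> * norm b / (\<alpha> * \<beta>) \<le> (d * M) * (2 * M) / (c * c)"
    proof (rule frac_le)
      show "0 \<le> d * M * (2 * M)" using M unfolding d_def by simp
      show "\<bar>\<beta> - \<alpha>\<bar> * norm b \<le> d * M * (2 * M)"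
        using mult_mono[OF order_trans[OF de ne] nb] M(1) unfolding d_def by simp
      show "0 < c * c" using c by simp
      show "c * c \<le> \<alpha> * \<beta>" using mult_mono[OF ca cb] ap c by simp
    qed
    finally have "norm ((1/\<alpha>) *\<^sub>R a - (1/\<beta>) *\<^sub>R b) \<le> d * M / c + d * M * (2 * M) / (c * c)" by simp
    also have "\<dots> = K * d" unfolding K_def by (simp add: field_simps)
    finally show ?thesis unfolding dist_norm a_def b_def \<alpha>_def \<beta>_def d_def by (simp add: dist_norm)
  qed
  then show ?thesis using Kp by blast
qed

theorem mainTheorem16:
  fixes \<psi> :: "real^3^3"
  assumes "\<psi> \<in> SO0_21"
  shows "\<exists>K>0. \<forall>\<epsilon>>0. \<forall>g\<in>SO0_21.
           eps_hyperbolic \<epsilon> (\<psi> ** g ** matrix_inv \<psi>) \<longrightarrow> eps_hyperbolic (\<epsilon> / K) g"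
proof -
  define P :: "real^3 \<Rightarrow> real^3" where "P v = (1 / v$3) *\<^sub>R v" for v
  obtain K where K: "K > 0" "\<forall>x\<in>S1. \<forall>y\<in>S1. dist (P (\<psi> *v x)) (P (\<psi> *v y)) \<le> K * dist x y"
    using lip[OF assms] unfolding P_def by blast
  have psiO: "\<psi> \<in> O21" using SO0_O21[OF assms] .
  define Q where "Q = matrix_inv \<psi>"
  have "\<exists>A. \<psi> ** A = mat 1 \<and> A ** \<psi> = mat 1" using psiO by (simp add: O21_def invertible_def)
  then have "\<psi> ** Q = mat 1 \<and> Q ** \<psi> = mat 1" unfolding Q_def matrix_inv_def
    by (rule someI_ex)
  then have Qinv: "\<psi> ** Q = mat 1" "Q ** \<psi> = mat 1" by auto
  have QR: "\<psi> *v (Q *v v) = v" for v using Qinv(1) by (simp add: matrix_vector_mul_assoc)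
  have QL: "Q *v (\<psi> *v v) = v" for v using Qinv(2) by (simp add: matrix_vector_mul_assoc)
  have psiB: "Bform (\<psi> *v u) (\<psi> *v v) = Bform u v" for u v using psiO by (simp add: O21_def)
  have QB: "Bform (Q *v u) (Q *v v) = Bform u v" for u v using psiB[of "Q *v u" "Q *v v"] by (simp add: QR)
  show ?thesis
  proof (intro exI[of _ K] conjI allI impI ballI)
    show "K > 0" by fact
    fix \<epsilon> :: real and g assume "\<epsilon> > 0" and gS: "g \<in> SO0_21"
      and eh: "eps_hyperbolic \<epsilon> (\<psi> ** g ** matrix_inv \<psi>)"
    define h where "h = \<psi> ** g ** Q"
    have hv: "h *v v = \<psi> *v (g *v (Q *v v))" for v by (simp add: h_def matrix_vector_mul_assoc matrix_mul_assoc)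
    have gO: "g \<in> O21" using SO0_O21[OF gS] .
    have gB: "\<forall>u v. Bform (g *v u) (g *v v) = Bform u v" using gO by (simp add: O21_def)
    have hB: "\<forall>u v. Bform (h *v u) (h *v v) = Bform u v" proof (intro allI)
      fix u v
      have "Bform (h *v u) (h *v v) = Bform (g *v (Q *v u)) (g *v (Q *v v))" by (simp only: hv psiB)
      also have "\<dots> = Bform u v" using gB QB by simp
      finally show "Bform (h *v u) (h *v v) = Bform u v" .
    qed
    have ehh: "hyperbolic h \<and> \<epsilon> \<le> dist (x_plus h) (x_minus h)"
      using eh unfolding eps_hyperbolic_def h_def Q_def .
    have hh: "hyperbolic h" using ehh by (rule conjunct1)
    have hd: "\<epsilon> \<le> dist (x_plus h) (x_minus h)" using ehh by (rule conjunct2)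
    have eig_back: "\<exists>v. v \<noteq> 0 \<and> g *v v = l *\<^sub>R v" if "\<exists>v. v \<noteq> 0 \<and> h *v v = l *\<^sub>R v" for l
    proof -
      from that obtain v where v: "v \<noteq> 0" "h *v v = l *\<^sub>R v" by (elim exE conjE)
      have "g *v (Q *v v) = Q *v (h *v v)" by (simp add: hv QL)
      also have "\<dots> = l *\<^sub>R (Q *v v)" using v(2) by (simp add: matrix_vector_mult_scaleR)
      finally have "g *v (Q *v v) = l *\<^sub>R (Q *v v)" .
      moreover have "Q *v v \<noteq> 0" using v(1) QR[of v] by auto
      ultimately show ?thesis by (intro exI[of _ "Q *v v"] conjI)
    qed
    have hg: "hyperbolic g"
    proof -
      obtain a b c where abc: "a \<noteq> b" "b \<noteq> c" "a \<noteq> c"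
        "\<forall>l\<in>{a,b,c}. \<exists>v. v \<noteq> 0 \<and> h *v v = l *\<^sub>R v"
        using hh unfolding hyperbolic_def by blast
      have "\<forall>l\<in>{a,b,c}. \<exists>v. v \<noteq> 0 \<and> g *v v = l *\<^sub>R v"
        using abc(4) eig_back by blast
      then show ?thesis unfolding hyperbolic_def using abc(1-3) by blast
    qed
    obtain x l where xl: "x \<in> S1" "1 < l" "g *v x = l *\<^sub>R x" using ex_pm(1)[OF gS hg] by blast
    obtain y m where ym: "y \<in> S1" "0 < m" "m < 1" "g *v y = m *\<^sub>R y" using ex_pm(2)[OF gS hg] by blast
    have gx: "x_plus g = x" by (rule xplus_eq[OF gB xl])
    have gy: "x_minus g = y" by (rule xminus_eq[OF gB ym])
    have transfer: "P (\<psi> *v z) \<in> S1 \<and> h *v P (\<psi> *v z) = k *\<^sub>R P (\<psi> *v z)"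
      if "z \<in> S1" "g *v z = k *\<^sub>R z" for z k
    proof -
      have "Bform (\<psi> *v z) (\<psi> *v z) = 0" using S1_Bform[OF that(1)] by (simp add: psiB)
      moreover have "(\<psi> *v z)$3 \<noteq> 0" using cone[OF assms that(1)] by simp
      ultimately have "P (\<psi> *v z) \<in> S1" unfolding P_def by (rule normalize_S1)
      moreover have "h *v (\<psi> *v z) = k *\<^sub>R (\<psi> *v z)"
        using that(2) by (simp add: hv QL matrix_vector_mult_scaleR)
      ultimately show ?thesis unfolding P_def by (simp add: matrix_vector_mult_scaleR)
    qed
    have hx: "x_plus h = P (\<psi> *v x)"
      using transfer[OF xl(1,3)] xplus_eq[OF hB _ xl(2)] by blast
    have hy: "x_minus h = P (\<psi> *v y)"
      using transfer[OF ym(1,4)] xminus_eq[OF hB _ ym(2,3)] by blast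
    have "\<epsilon> \<le> K * dist x y" using hd K(2) xl(1) ym(1) hx hy by fastforce
    then have "\<epsilon> / K \<le> dist x y" using K(1) by (simp add: divide_le_eq mult.commute)
    then show "eps_hyperbolic (\<epsilon> / K) g" unfolding eps_hyperbolic_def using hg gx gy by simp
  qed
qed

end
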